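(* Let $\nu\in S^{d-1}$, let $c_1,c_2:\mathbb R^{d+1}\to\mathbb R$ be continuous and uniformly bounded, $\xi:\mathbb R^{d+1}\to S^{d-1}$ a continuous vector field, and $C_0>c_0>0$. There exist constants $c,C>0$, depending only on $\lambda,\Lambda,d,c_0,C_0$ and the bounds of $c_1,c_2$, such that: if $\epsilon>0$, $L>R>0$ with $L\epsilon\le c$, and $w$ is a viscosity solution of $$\partial_tw-\mathcal P^+(D^2w)-(\epsilon c_1+\epsilon^3c_2t)\,\xi\cdot Dw\le0\ \text{in }Q_L,\qquad w\le c_0\ \text{on }\overline{Q_L}\cap\partial P_\nu,\qquad w\le C_0\ \text{on }\overline{Q_L},$$ then $w(x,t)\le c_0+C\frac{R}{L}$ for $(x,t)\in Q_R$.
   Context: $P_\nu=\{(x,t)\in\mathbb R^d\times\mathbb R:x\cdot\nu\ge0\}$; with $x_\nu=x\cdot\nu$, $x'=x-x_\nu\nu$, $Q_L=\{(x,t):0<x_\nu<L,|t|<L^2,|x'|<L\}$. $\mathcal P^+(M)=\Lambda\,\mathrm{Tr}M_+-\lambda\,\mathrm{Tr}M_-$ ($0<\lambda<\Lambda$) is Pucci's maximal operator. *)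

theory Defs
  imports "HOL-Analysis.Analysis"
begin

definition outer :: "real^'n \<Rightarrow> real^'n^'n" where
  "outer b = (\<chi> i j. b $ i * b $ j)"

definition orth_eigenbasis :: "real^'n^'n \<Rightarrow> (real^'n) set \<Rightarrow> bool" where
  "orth_eigenbasis M B \<longleftrightarrow> finite B \<and> card B = CARD('n) \<and>
     (\<forall>b\<in>B. norm b = 1 \<and> (\<exists>\<mu>::real. M *v b = \<mu> *\<^sub>R b)) \<and>
     (\<forall>b\<in>B. \<forall>b'\<in>B. b \<noteq> b' \<longrightarrow> b \<bullet> b' = 0)"

definition pos_part :: "real^'n^'n \<Rightarrow> real^'n^'n" where
  "pos_part M = (SOME P. \<exists>B. orth_eigenbasis M B \<and>
      P = (\<Sum>b\<in>B. max (b \<bullet> (M *v b)) 0 *\<^sub>R outer b))"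

definition neg_part :: "real^'n^'n \<Rightarrow> real^'n^'n" where
  "neg_part M = pos_part M - M"

definition pucci_max :: "real \<Rightarrow> real \<Rightarrow> real^'n^'n \<Rightarrow> real" where
  "pucci_max lam Lam M = Lam * trace (pos_part M) - lam * trace (neg_part M)"

definition cylQ :: "real^'n \<Rightarrow> real \<Rightarrow> ((real^'n) \<times> real) set" where
  "cylQ \<nu> L = {(x,t). 0 < x \<bullet> \<nu> \<and> x \<bullet> \<nu> < L \<and> \<bar>t\<bar> < L^2 \<and>
                       norm (x - (x \<bullet> \<nu>) *\<^sub>R \<nu>) < L}"

definition halfspace_bdry :: "real^'n \<Rightarrow> ((real^'n) \<times> real) set" where
  "halfspace_bdry \<nu> = {(x,t). x \<bullet> \<nu> = 0}"

(* viscosity subsolution of  w_t - P^+(D^2 w) - b(x,t).Dw <= 0  in the open set Q,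
   formulated via parabolic second order superjets (Crandall-Ishii-Lions) *)
definition visc_sub :: "real \<Rightarrow> real \<Rightarrow> (real^'n \<Rightarrow> real \<Rightarrow> real^'n)
     \<Rightarrow> (real^'n \<Rightarrow> real \<Rightarrow> real) \<Rightarrow> ((real^'n) \<times> real) set \<Rightarrow> bool" where
  "visc_sub lam Lam b w Q \<longleftrightarrow>
     (\<forall>x0 t0 q p X. (x0,t0) \<in> Q \<and> transpose X = X \<and>
        (\<forall>e>0. \<exists>\<delta>>0. \<forall>x t. (x,t) \<in> Q \<and> norm (x - x0) < \<delta> \<and> \<bar>t - t0\<bar> < \<delta> \<longrightarrow>
            w x t \<le> w x0 t0 + q * (t - t0) + p \<bullet> (x - x0)
                      + (1/2) * ((x - x0) \<bullet> (X *v (x - x0)))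
                      + e * (\<bar>t - t0\<bar> + (norm (x - x0))^2))
      \<longrightarrow> q - pucci_max lam Lam X - b x0 t0 \<bullet> p \<le> 0)"

end

theory Submission
  imports Defs
begin


lemma outer_mulv: "outer b *v d = (b \<bullet> d) *\<^sub>R b"
  by (simp add: vec_eq_iff matrix_vector_mult_def outer_def inner_vec_def sum_distrib_left mult_ac)

lemma trace_outer: "trace (outer b) = b \<bullet> b"
  by (simp add: trace_def outer_def inner_vec_def)

lemma trace_scaleR: "trace (c *\<^sub>R (A::real^'n^'n)) = c * trace A"
  by (simp add: trace_def sum_distrib_left)

lemma trace_sum: "trace (\<Sum>b\<in>B. f b :: real^'n^'n) = (\<Sum>b\<in>B. trace (f b))"
  by (simp add: trace_def sum_component sum.swap[of _ B])

definition XM :: "real^'n \<Rightarrow> real \<Rightarrow> real \<Rightarrow> real^'n^'n" where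
  "XM \<nu> a k = a *\<^sub>R outer \<nu> + k *\<^sub>R (mat 1 - outer \<nu>)"

lemma XM_mulv: "XM \<nu> a k *v d = (a * (\<nu> \<bullet> d)) *\<^sub>R \<nu> + k *\<^sub>R (d - (\<nu> \<bullet> d) *\<^sub>R \<nu>)"
  proof -
  have "XM \<nu> a k *v d = a *\<^sub>R (outer \<nu> *v d) + k *\<^sub>R (d - outer \<nu> *v d)"
    by (simp add: XM_def matrix_vector_mult_add_rdistrib matrix_vector_mult_diff_rdistrib
        flip: scaleR_matrix_vector_assoc)
  then show ?thesis by (simp add: outer_mulv algebra_simps)
qed

lemma XM_quad: "d \<bullet> (XM \<nu> a k *v d) = a * (\<nu> \<bullet> d)^2 + k * (d \<bullet> d - (\<nu> \<bullet> d)^2)"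
  by (simp add: XM_mulv inner_diff_right inner_commute power2_eq_square algebra_simps)

lemma trace_XM: "norm \<nu> = 1 \<Longrightarrow> trace (XM (\<nu>::real^'n) a k) = a + k * (CARD('n) - 1)"
  by (simp add: XM_def trace_add trace_sub trace_scaleR trace_outer trace_I norm_eq_1)

lemma pucci_XM:
  fixes \<nu> :: "real^'n"
  assumes nu: "norm \<nu> = 1" and a: "a < 0" and k: "0 \<le> k" and l: "0 \<le> lam" "lam \<le> Lam"
  shows "pucci_max lam Lam (XM \<nu> a k) \<le> Lam * (real CARD('n) - 1) * k + lam * a"
proof -
  let ?X = "XM \<nu> a k"
  have nn: "\<nu> \<bullet> \<nu> = 1" using nu by (simp add: norm_eq_1)
  obtain S where S: "\<nu> \<in> S" "pairwise orthogonal S" "\<And>x. x \<in> S \<Longrightarrow> norm x = 1"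
    "independent S" "card S = DIM(real^'n)"
    using vector_in_orthonormal_basis[OF nu] by metis
  have "orth_eigenbasis ?X S"
    unfolding orth_eigenbasis_def
  proof (intro conjI ballI impI)
    show "finite S" using S(4) independent_imp_finite by blast
    show "card S = CARD('n)" using S(5) by simp
  next
    fix b assume b: "b \<in> S"
    show "norm b = 1" using S(3) b by blast
    show "\<exists>\<mu>. ?X *v b = \<mu> *\<^sub>R b"
    proof (cases "b = \<nu>")
      case True then show ?thesis by (auto simp: XM_mulv nn)
    next
      case False
      then have "\<nu> \<bullet> b = 0" using S(1,2) b by (auto simp: pairwise_def orthogonal_def)
      then show ?thesis by (auto simp: XM_mulv)
    qed
  next
    fix b b' assume "b \<in> S" "b' \<in> S" "b \<noteq> b'"
    then show "b \<bullet> b' = 0" using S(2) by (auto simp: pairwise_def orthogonal_def)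
  qed
  then have "\<exists>P. \<exists>B. orth_eigenbasis ?X B \<and> P = (\<Sum>b\<in>B. max (b \<bullet> (?X *v b)) 0 *\<^sub>R outer b)"
    by blast
  from someI_ex[OF this] obtain B where B: "orth_eigenbasis ?X B"
    and P: "pos_part ?X = (\<Sum>b\<in>B. max (b \<bullet> (?X *v b)) 0 *\<^sub>R outer b)"
    unfolding pos_part_def by blast
  have fin: "finite B" and cB: "card B = CARD('n)"
    and unit: "\<And>b. b \<in> B \<Longrightarrow> norm b = 1"
    and eig: "\<And>b. b \<in> B \<Longrightarrow> \<exists>\<mu>. ?X *v b = \<mu> *\<^sub>R b"
    and orth: "\<And>b b'. b \<in> B \<Longrightarrow> b' \<in> B \<Longrightarrow> b \<noteq> b' \<Longrightarrow> b \<bullet> b' = 0"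
    using B unfolding orth_eigenbasis_def by auto
  have bb: "b \<bullet> b = 1" if "b \<in> B" for b using unit[OF that] by (simp add: norm_eq_1)
  have trP: "trace (pos_part ?X) = (\<Sum>b\<in>B. max (b \<bullet> (?X *v b)) 0)"
    by (simp add: P trace_sum trace_scaleR trace_outer bb)
  have le_k: "max (b \<bullet> (?X *v b)) 0 \<le> k" if "b \<in> B" for b
  proof -
    have "(\<nu> \<bullet> b)^2 \<le> 1"
    proof -
      have "\<bar>\<nu> \<bullet> b\<bar> \<le> norm \<nu> * norm b" by (rule Cauchy_Schwarz_ineq2)
      then have "\<bar>\<nu> \<bullet> b\<bar> \<le> 1" using nu unit[OF that] by simp
      then have "\<bar>\<nu> \<bullet> b\<bar>^2 \<le> 1" by (intro power_le_one) auto
      then show ?thesis by simp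
    qed
    moreover have "0 \<le> (\<nu> \<bullet> b)^2" by simp
    ultimately have "a * (\<nu> \<bullet> b)^2 \<le> 0" "k * (1 - (\<nu> \<bullet> b)^2) \<le> k"
      using a k by (auto intro: mult_nonpos_nonneg simp: mult_left_le)
    then have "b \<bullet> (?X *v b) \<le> k"
      using bb[OF that] unfolding XM_quad by simp
    then show ?thesis using k by simp
  qed
  obtain b0 where b0: "b0 \<in> B" "\<nu> \<bullet> b0 \<noteq> 0"
  proof (rule ccontr)
    assume "\<not> thesis"
    then have z: "\<forall>b\<in>B. \<nu> \<bullet> b = 0" using that by blast
    have "\<nu> \<notin> B" using z nn by auto
    have "pairwise orthogonal (insert \<nu> B)"
      using z orth by (auto simp: pairwise_def orthogonal_def inner_commute)
    moreover have "0 \<notin> insert \<nu> B" using nn bb by force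
    ultimately have "independent (insert \<nu> B)" by (rule pairwise_orthogonal_independent)
    then have "card (insert \<nu> B) \<le> CARD('n)" using independent_bound by fastforce
    then show False using \<open>\<nu> \<notin> B\<close> fin cB by simp
  qed
  obtain \<mu> where mu: "?X *v b0 = \<mu> *\<^sub>R b0" using eig[OF b0(1)] by blast
  have "\<nu> \<bullet> (?X *v b0) = a * (\<nu> \<bullet> b0)"
    by (simp add: XM_mulv inner_add_right inner_diff_right nn)
  then have "\<mu> * (\<nu> \<bullet> b0) = a * (\<nu> \<bullet> b0)" using mu by simp
  then have "\<mu> = a" using b0(2) by simp
  then have q0: "b0 \<bullet> (?X *v b0) = a" using mu bb[OF b0(1)] by simp
  have c1: "card B \<ge> 1" using b0(1) fin by (metis One_nat_def Suc_leI card_gt_0_iff empty_iff)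
  have "(\<Sum>b\<in>B. max (b \<bullet> (?X *v b)) 0) = max (b0 \<bullet> (?X *v b0)) 0 + (\<Sum>b\<in>B-{b0}. max (b \<bullet> (?X *v b)) 0)"
    using fin b0(1) by (simp add: sum.remove)
  also have "\<dots> \<le> 0 + (\<Sum>b\<in>B-{b0}. k)"
    using q0 a le_k by (intro add_mono sum_mono) auto
  also have "\<dots> = (real CARD('n) - 1) * k"
    using fin b0(1) cB c1 by (simp add: of_nat_diff)
  finally have T: "trace (pos_part ?X) \<le> (real CARD('n) - 1) * k" using trP by simp
  have trX: "trace ?X = a + k * (real CARD('n) - 1)"
    using trace_XM[OF nu, of a k] c1 cB by (simp add: of_nat_diff)
  have "pucci_max lam Lam ?X = (Lam - lam) * trace (pos_part ?X) + lam * trace ?X"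
    by (simp add: pucci_max_def neg_part_def trace_sub algebra_simps)
  also have "\<dots> \<le> (Lam - lam) * ((real CARD('n) - 1) * k) + lam * trace ?X"
    using T l by (intro add_mono mult_left_mono) auto
  finally show ?thesis using trX by (simp add: algebra_simps)
qed

lemma norm_perp_sq: "norm \<nu> = 1 \<Longrightarrow> (norm (x - (x \<bullet> \<nu>) *\<^sub>R \<nu>))^2 = x \<bullet> x - (x \<bullet> \<nu>)^2"
proof -
  assume "norm \<nu> = 1"
  then have nn: "\<nu> \<bullet> \<nu> = 1" by (simp add: norm_eq_1)
  have "(norm (x - (x \<bullet> \<nu>) *\<^sub>R \<nu>))^2 = (x - (x \<bullet> \<nu>) *\<^sub>R \<nu>) \<bullet> (x - (x \<bullet> \<nu>) *\<^sub>R \<nu>)"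
    by (rule power2_norm_eq_inner)
  also have "\<dots> = x \<bullet> x - (x \<bullet> \<nu>)^2"
    by (simp add: inner_diff_left inner_diff_right nn inner_commute power2_eq_square)
  finally show ?thesis .
qed

definition phi :: "real \<Rightarrow> real \<Rightarrow> real \<Rightarrow> real \<Rightarrow> real \<Rightarrow> real^'n \<Rightarrow> real^'n \<Rightarrow> real \<Rightarrow> real" where
  "phi c0 A mu M L \<nu> x t = c0 + A * ((x \<bullet> \<nu>) / L) - mu / 2 * ((x \<bullet> \<nu>) / L)^2
     + M * (norm (x - (x \<bullet> \<nu>) *\<^sub>R \<nu>) / L)^2 + M * (t / L^2)^2"

lemma phi_taylor:
  assumes "norm \<nu> = 1" "L > 0"
  shows "phi c0 A mu M L \<nu> x t - phi c0 A mu M L \<nu> x0 t0 =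
    (2 * M * t0 / L^4) * (t - t0)
    + ((A / L - mu * (x0 \<bullet> \<nu>) / L^2) *\<^sub>R \<nu> + (2 * M / L^2) *\<^sub>R (x0 - (x0 \<bullet> \<nu>) *\<^sub>R \<nu>)) \<bullet> (x - x0)
    + 1/2 * ((x - x0) \<bullet> (XM \<nu> (- mu / L^2) (2 * M / L^2) *v (x - x0)))
    + M * ((t - t0) / L^2)^2"
proof -
  have nn: "\<nu> \<bullet> \<nu> = 1" using assms by (simp add: norm_eq_1)
  define d where "d = x - x0"
  have x: "x = x0 + d" by (simp add: d_def)
  have e1: "x \<bullet> \<nu> = x0 \<bullet> \<nu> + d \<bullet> \<nu>" by (simp add: x inner_add_left)
  have e2: "x \<bullet> x = x0 \<bullet> x0 + 2 * (x0 \<bullet> d) + d \<bullet> d"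
    by (simp add: x inner_add_left inner_add_right inner_commute)
  have e3: "((A / L - mu * (x0 \<bullet> \<nu>) / L^2) *\<^sub>R \<nu> + (2 * M / L^2) *\<^sub>R (x0 - (x0 \<bullet> \<nu>) *\<^sub>R \<nu>)) \<bullet> d
     = (A / L - mu * (x0 \<bullet> \<nu>) / L^2) * (d \<bullet> \<nu>) + (2 * M / L^2) * (x0 \<bullet> d - (x0 \<bullet> \<nu>) * (d \<bullet> \<nu>))"
    using assms(2) by (simp add: inner_add_left inner_diff_left inner_add_right inner_diff_right inner_commute field_simps)
  have e4: "d \<bullet> (XM \<nu> (- mu / L^2) (2 * M / L^2) *v d) = (- mu / L^2) * (d \<bullet> \<nu>)^2 + (2 * M / L^2) * (d \<bullet> d - (d \<bullet> \<nu>)^2)"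
    by (simp add: XM_quad inner_commute)
  have alg: "\<And>s0 ds xx x0d dd. c0 + A * ((s0 + ds) / L) - mu / 2 * ((s0 + ds) / L)^2
     + M * (((xx + 2 * x0d + dd) - (s0 + ds)^2) / L^2) + M * (t / L^2)^2
     - (c0 + A * (s0 / L) - mu / 2 * (s0 / L)^2 + M * ((xx - s0^2) / L^2) + M * (t0 / L^2)^2)
     = (2 * M * t0 / L^4) * (t - t0)
     + ((A / L - mu * s0 / L^2) * ds + (2 * M / L^2) * (x0d - s0 * ds))
     + 1/2 * ((- mu / L^2) * ds^2 + (2 * M / L^2) * (dd - ds^2))
     + M * ((t - t0) / L^2)^2"
    using assms(2) by (simp add: field_simps power2_eq_square) (simp add: algebra_simps power2_eq_square power4_eq_xxxx)
  have n1: "(norm (x - (x \<bullet> \<nu>) *\<^sub>R \<nu>) / L)^2 = ((x \<bullet> x) - (x \<bullet> \<nu>)^2) / L^2"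
    by (simp add: power_divide norm_perp_sq[OF assms(1)])
  have n0: "(norm (x0 - (x0 \<bullet> \<nu>) *\<^sub>R \<nu>) / L)^2 = ((x0 \<bullet> x0) - (x0 \<bullet> \<nu>)^2) / L^2"
    by (simp add: power_divide norm_perp_sq[OF assms(1)])
  show ?thesis
    unfolding phi_def unfolding n1 n0 unfolding d_def[symmetric] e3 e4 unfolding e1 e2 by (rule alg)
qed

lemma closure_cylQ:
  "closure (cylQ \<nu> L) \<subseteq> {z. 0 \<le> fst z \<bullet> \<nu> \<and> fst z \<bullet> \<nu> \<le> L \<and> \<bar>snd z\<bar> \<le> L^2
     \<and> norm (fst z - (fst z \<bullet> \<nu>) *\<^sub>R \<nu>) \<le> L}"
proof (rule closure_minimal)
  show "cylQ \<nu> L \<subseteq> {z. 0 \<le> fst z \<bullet> \<nu> \<and> fst z \<bullet> \<nu> \<le> L \<and> \<bar>snd z\<bar> \<le> L^2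
     \<and> norm (fst z - (fst z \<bullet> \<nu>) *\<^sub>R \<nu>) \<le> L}" by (auto simp: cylQ_def)
  show "closed {z. 0 \<le> fst z \<bullet> \<nu> \<and> fst z \<bullet> \<nu> \<le> L \<and> \<bar>snd z\<bar> \<le> L^2
     \<and> norm (fst z - (fst z \<bullet> \<nu>) *\<^sub>R \<nu>) \<le> L}"
    by (intro closed_Collect_conj closed_Collect_le continuous_intros)
qed

lemma bounded_cylQ: "bounded (cylQ \<nu> L)"
proof -
  have "cylQ \<nu> L \<subseteq> cball 0 (norm \<nu> * L + L + L^2)"
  proof
    fix z assume "z \<in> cylQ \<nu> L"
    then obtain x t where z: "z = (x,t)" "0 < x \<bullet> \<nu>" "x \<bullet> \<nu> < L" "\<bar>t\<bar> < L^2"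
      "norm (x - (x \<bullet> \<nu>) *\<^sub>R \<nu>) < L" by (auto simp: cylQ_def)
    have "norm x \<le> norm ((x \<bullet> \<nu>) *\<^sub>R \<nu>) + norm (x - (x \<bullet> \<nu>) *\<^sub>R \<nu>)"
      by (metis add.commute diff_add_cancel norm_triangle_ineq)
    also have "norm ((x \<bullet> \<nu>) *\<^sub>R \<nu>) \<le> L * norm \<nu>"
      using z by (simp add: mult_right_mono)
    finally have "norm x \<le> norm \<nu> * L + L" using z by (simp add: mult.commute)
    then show "z \<in> cball 0 (norm \<nu> * L + L + L^2)"
      using z norm_Pair_le[of x t] by simp
  qed
  then show ?thesis using bounded_cball bounded_subset by blast
qed

lemma transpose_XM: "transpose (XM \<nu> a k) = XM \<nu> a k"
  by (simp add: vec_eq_iff transpose_def XM_def outer_def mat_def)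

lemma mem_cylQ: "(x,t) \<in> cylQ \<nu> L \<longleftrightarrow> 0 < x \<bullet> \<nu> \<and> x \<bullet> \<nu> < L \<and> \<bar>t\<bar> < L^2 \<and>
                       norm (x - (x \<bullet> \<nu>) *\<^sub>R \<nu>) < L"
  by (simp add: cylQ_def)

lemma main_bound:
  fixes \<nu> :: "real^'d" and w :: "real^'d \<Rightarrow> real \<Rightarrow> real"
  assumes lam: "0 < lam" "lam < Lam" and cc: "0 < c0" "c0 < C0" and K: "0 \<le> K"
  and M_def: "M = C0 - c0"
  and mu_def: "mu = 2 * (2 * M + 2 * Lam * (real CARD('d) - 1) * M + lam * M + 1) / lam"
  and A_def: "A = M + mu / 2"
  and c: "0 < c" "c \<le> 1" "6 * K * c \<le> lam"
  and nu: "norm \<nu> = 1"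
  and bnd: "\<forall>x t. \<bar>c1 x t\<bar> \<le> K \<and> \<bar>c2 x t\<bar> \<le> K" and xi: "\<forall>x t. norm (\<xi> x t) = 1"
  and eps: "\<epsilon> > 0" "0 < R" "R < L" "L * \<epsilon> \<le> c"
  and wc: "continuous_on (closure (cylQ \<nu> L)) (\<lambda>z. w (fst z) (snd z))"
  and vs: "visc_sub lam Lam (\<lambda>x t. (\<epsilon> * c1 x t + \<epsilon>^3 * c2 x t * t) *\<^sub>R \<xi> x t) w (cylQ \<nu> L)"
  and bd0: "\<forall>(x,t) \<in> closure (cylQ \<nu> L) \<inter> halfspace_bdry \<nu>. w x t \<le> c0"
  and bd1: "\<forall>(x,t) \<in> closure (cylQ \<nu> L). w x t \<le> C0"
  shows "\<forall>(x,t) \<in> cylQ \<nu> R. w x t \<le> c0 + (3 * M + mu / 2) * R / L"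
proof -
  define n where "n = real CARD('d)"
  have n1: "n \<ge> 1" unfolding n_def by simp
  have Mpos: "M > 0" using cc M_def by simp
  have lmu: "lam * mu = 2 * (2 * M + 2 * Lam * (n - 1) * M + lam * M + 1)"
    using lam unfolding mu_def n_def by simp
  have mupos: "mu > 0"
  proof -
    have z1: "2 * Lam * (n - 1) * M \<ge> 0" using lam n1 Mpos by simp
    have z2: "lam * M > 0" using lam Mpos by simp
    have gen: "0 < (2::real) * (2 * M + Z + Y + 1)" if "0 \<le> Z" "0 < Y" for Z Y
      using Mpos that by simp
    have "lam * mu > 0" unfolding lmu by (rule gen[OF z1 z2])
    then show ?thesis using lam by (simp add: zero_less_mult_iff)
  qed
  have Lpos: "L > 0" using eps by simp
  have Lne: "L \<noteq> 0" using Lpos by simp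
  let ?phi = "phi c0 A mu M L \<nu>"
  have nn: "\<nu> \<bullet> \<nu> = 1" using nu by (simp add: norm_eq_1)
  have su: "A * u - mu / 2 * u^2 \<ge> M * u" if "0 \<le> u" "u \<le> 1" for u
  proof -
    have "A * u - mu / 2 * u^2 - M * u = mu / 2 * (u * (1 - u))"
      unfolding A_def by (simp add: algebra_simps power2_eq_square)
    also have "\<dots> \<ge> 0" using that mupos by simp
    finally show ?thesis by simp
  qed
  have le: "w x t \<le> ?phi x t" if xt: "(x,t) \<in> cylQ \<nu> L" for x t
  proof (rule ccontr)
    assume "\<not> w x t \<le> ?phi x t"
    then have gt: "w x t - ?phi x t > 0" by simp
    let ?S = "closure (cylQ \<nu> L)"
    let ?f = "\<lambda>z. w (fst z) (snd z) - ?phi (fst z) (snd z)"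
    have contphi: "continuous_on ?S (\<lambda>z. ?phi (fst z) (snd z))"
      unfolding phi_def by (intro continuous_intros) (simp_all add: Lne)
    have cf: "continuous_on ?S ?f" by (intro continuous_on_diff wc contphi)
    have cS: "compact ?S" using bounded_cylQ by simp
    have xtS: "(x,t) \<in> ?S" by (rule subsetD[OF closure_subset xt])
    have neS: "?S \<noteq> {}"
    proof
      assume "?S = {}" with xtS show False by simp
    qed
    obtain z0 where z0: "z0 \<in> ?S" "\<forall>y\<in>?S. ?f y \<le> ?f z0"
      using continuous_attains_sup[OF cS neS cf] by (elim bexE)
    obtain x0 t0 where z0e: "z0 = (x0, t0)" by (cases z0)
    have "?f (x,t) \<le> ?f z0" using z0(2) xtS by (rule bspec)
    then have fpos: "?f z0 > 0" using gt by simp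
    have inS: "(x0,t0) \<in> ?S" using z0 z0e by simp
    have "(x0,t0) \<in> {z. 0 \<le> fst z \<bullet> \<nu> \<and> fst z \<bullet> \<nu> \<le> L \<and> \<bar>snd z\<bar> \<le> L^2
     \<and> norm (fst z - (fst z \<bullet> \<nu>) *\<^sub>R \<nu>) \<le> L}"
      using closure_cylQ inS by (rule subsetD)
    then have cl: "0 \<le> x0 \<bullet> \<nu>" "x0 \<bullet> \<nu> \<le> L" "\<bar>t0\<bar> \<le> L^2" "norm (x0 - (x0 \<bullet> \<nu>) *\<^sub>R \<nu>) \<le> L"
      by simp_all
    have Q0: "(x0,t0) \<in> cylQ \<nu> L"
    proof (rule ccontr)
      assume nq: "(x0,t0) \<notin> cylQ \<nu> L"
      have sA: "A * (x0 \<bullet> \<nu> / L) - mu / 2 * (x0 \<bullet> \<nu> / L)^2 \<ge> M * (x0 \<bullet> \<nu> / L)"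
        using su[of "x0 \<bullet> \<nu> / L"] cl Lpos by simp
      have sB: "M * (x0 \<bullet> \<nu> / L) \<ge> 0" using Mpos cl Lpos by simp
      have phiM: "?phi x0 t0 \<ge> c0 + M * (x0 \<bullet> \<nu> / L)" and phi0: "?phi x0 t0 \<ge> c0"
      proof -
        have "A * (x0 \<bullet> \<nu> / L) - mu / 2 * (x0 \<bullet> \<nu> / L)^2 \<ge> M * (x0 \<bullet> \<nu> / L)"
          using su[of "x0 \<bullet> \<nu> / L"] cl Lpos by simp
        moreover have "M * (x0 \<bullet> \<nu> / L) \<ge> 0" using Mpos cl Lpos by simp
        moreover have "M * (norm (x0 - (x0 \<bullet> \<nu>) *\<^sub>R \<nu>) / L)^2 \<ge> 0" "M * (t0 / L^2)^2 \<ge> 0"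
          using Mpos by auto
        ultimately show "?phi x0 t0 \<ge> c0 + M * (x0 \<bullet> \<nu> / L)" "?phi x0 t0 \<ge> c0"
          unfolding phi_def by linarith+
      qed
      have "w x0 t0 \<le> ?phi x0 t0"
      proof (cases "x0 \<bullet> \<nu> = 0")
        case True
        then have "(x0,t0) \<in> halfspace_bdry \<nu>" by (simp add: halfspace_bdry_def)
        then have "(x0,t0) \<in> closure (cylQ \<nu> L) \<inter> halfspace_bdry \<nu>" using inS by (rule IntI[rotated])
        then have "w x0 t0 \<le> c0" using bspec[OF bd0] by fastforce
        then show ?thesis using phi0 by simp
      next
        case False
        have "w x0 t0 \<le> C0" using bspec[OF bd1 inS] by simp
        then have wC: "w x0 t0 \<le> c0 + M" using M_def by simp
        have "x0 \<bullet> \<nu> = L \<or> \<bar>t0\<bar> = L^2 \<or> norm (x0 - (x0 \<bullet> \<nu>) *\<^sub>R \<nu>) = L"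
          using nq False cl unfolding mem_cylQ by linarith
        moreover
        have "?phi x0 t0 \<ge> c0 + M" if "x0 \<bullet> \<nu> = L"
          using phiM that Lpos by simp
        moreover have "?phi x0 t0 \<ge> c0 + M" if "\<bar>t0\<bar> = L^2"
        proof -
          have "t0^2 = (L^2)^2" using that by (metis power2_abs)
          then have "(t0 / L^2)^2 = 1" using Lpos by (simp add: power_divide)
          then have "M * (t0 / L^2)^2 = M" by simp
          moreover have "A * (x0 \<bullet> \<nu> / L) - mu / 2 * (x0 \<bullet> \<nu> / L)^2 \<ge> 0"
            using sA sB by linarith
          moreover have "M * (norm (x0 - (x0 \<bullet> \<nu>) *\<^sub>R \<nu>) / L)^2 \<ge> 0" using Mpos by simp
          ultimately show ?thesis unfolding phi_def by linarith
        qed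
        moreover have "?phi x0 t0 \<ge> c0 + M" if "norm (x0 - (x0 \<bullet> \<nu>) *\<^sub>R \<nu>) = L"
        proof -
          have "(norm (x0 - (x0 \<bullet> \<nu>) *\<^sub>R \<nu>) / L)^2 = 1" using that Lpos by simp
          then have "M * (norm (x0 - (x0 \<bullet> \<nu>) *\<^sub>R \<nu>) / L)^2 = M" by simp
          moreover have "A * (x0 \<bullet> \<nu> / L) - mu / 2 * (x0 \<bullet> \<nu> / L)^2 \<ge> 0"
            using sA sB by linarith
          moreover have "M * (t0 / L^2)^2 \<ge> 0" using Mpos by simp
          ultimately show ?thesis unfolding phi_def by linarith
        qed
        ultimately show ?thesis using wC by linarith
      qed
      then show False using fpos z0e by simp
    qed
    define q where "q = 2 * M * t0 / L^4"
    define p where "p = (A / L - mu * (x0 \<bullet> \<nu>) / L^2) *\<^sub>R \<nu> + (2 * M / L^2) *\<^sub>R (x0 - (x0 \<bullet> \<nu>) *\<^sub>R \<nu>)"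
    define X where "X = XM \<nu> (- mu / L^2) (2 * M / L^2)"
    have jet: "\<forall>e>0. \<exists>\<delta>>0. \<forall>x t. (x,t) \<in> cylQ \<nu> L \<and> norm (x - x0) < \<delta> \<and> \<bar>t - t0\<bar> < \<delta> \<longrightarrow>
            w x t \<le> w x0 t0 + q * (t - t0) + p \<bullet> (x - x0)
                      + (1/2) * ((x - x0) \<bullet> (X *v (x - x0)))
                      + e * (\<bar>t - t0\<bar> + (norm (x - x0))^2)"
    proof (intro allI impI)
      fix e :: real assume e: "e > 0"
      show "\<exists>\<delta>>0. \<forall>x t. (x,t) \<in> cylQ \<nu> L \<and> norm (x - x0) < \<delta> \<and> \<bar>t - t0\<bar> < \<delta> \<longrightarrow>
            w x t \<le> w x0 t0 + q * (t - t0) + p \<bullet> (x - x0)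
                      + (1/2) * ((x - x0) \<bullet> (X *v (x - x0)))
                      + e * (\<bar>t - t0\<bar> + (norm (x - x0))^2)"
      proof (intro exI[of _ "e * L^4 / M"] conjI allI impI)
        show "e * L^4 / M > 0" using e Lpos Mpos by simp
        fix x t assume H: "(x,t) \<in> cylQ \<nu> L \<and> norm (x - x0) < e * L^4 / M \<and> \<bar>t - t0\<bar> < e * L^4 / M"
        have "(x,t) \<in> cylQ \<nu> L" using H by simp
        then have "(x,t) \<in> ?S" by (rule subsetD[OF closure_subset])
        with z0(2) have "?f (x,t) \<le> ?f z0" by (rule bspec)
        then have w1: "w x t \<le> w x0 t0 + (?phi x t - ?phi x0 t0)" using z0e by simp
        have tq: "M * ((t - t0) / L^2)^2 \<le> e * \<bar>t - t0\<bar>"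
        proof -
          have "M * ((t - t0) / L^2)^2 = (M * \<bar>t - t0\<bar> * \<bar>t - t0\<bar>) / L^4"
            using Lne by (simp add: abs_mult_self_eq mult.assoc power_divide power2_eq_square power4_eq_xxxx)
          also have "M * \<bar>t - t0\<bar> * \<bar>t - t0\<bar> \<le> M * (e * L^4 / M) * \<bar>t - t0\<bar>"
            using H Mpos by (intro mult_right_mono mult_left_mono) auto
          also have "M * (e * L^4 / M) * \<bar>t - t0\<bar> = e * \<bar>t - t0\<bar> * L^4" using Mpos by simp
          finally show ?thesis using Lpos by (simp add: divide_right_mono)
        qed
        have "e * (norm (x - x0))^2 \<ge> 0" using e by simp
        then show "w x t \<le> w x0 t0 + q * (t - t0) + p \<bullet> (x - x0)
                      + (1/2) * ((x - x0) \<bullet> (X *v (x - x0)))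
                      + e * (\<bar>t - t0\<bar> + (norm (x - x0))^2)"
          using w1 tq phi_taylor[OF nu Lpos, of c0 A mu M x t x0 t0]
          unfolding q_def p_def X_def by (simp add: distrib_left)
      qed
    qed
    have tX: "transpose X = X" unfolding X_def by (rule transpose_XM)
    have "q - pucci_max lam Lam X - ((\<epsilon> * c1 x0 t0 + \<epsilon>^3 * c2 x0 t0 * t0) *\<^sub>R \<xi> x0 t0) \<bullet> p \<le> 0"
      by (rule vs[unfolded visc_sub_def, rule_format, of x0 t0 X q p]) (intro conjI Q0 tX jet)
    moreover have hq: "q \<ge> - 2 * M / L^2"
    proof -
      have "\<bar>t0\<bar> < L^2" using Q0 by (simp add: mem_cylQ)
      then have "t0 > -(L^2)" by linarith
      then have "2 * M * t0 \<ge> 2 * M * (-(L^2))" using Mpos by (intro mult_left_mono) auto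
      then have "q \<ge> 2 * M * (-(L^2)) / L^4" unfolding q_def using Lpos by (intro divide_right_mono) auto
      also have "2 * M * (-(L^2)) / L^4 = - 2 * M / L^2" using Lpos by (simp add: field_simps power4_eq_xxxx power2_eq_square)
      finally show ?thesis .
    qed
    moreover have hP: "pucci_max lam Lam X \<le> (2 * Lam * (n - 1) * M - lam * mu) / L^2"
    proof -
      have "pucci_max lam Lam X \<le> Lam * (n - 1) * (2 * M / L^2) + lam * (- mu / L^2)"
        unfolding X_def n_def using pucci_XM[OF nu, of "- mu / L^2" "2 * M / L^2" lam Lam] lam mupos Mpos Lpos
        by simp
      moreover have "Lam * (n - 1) * (2 * M / L^2) + lam * (- mu / L^2) = (2 * Lam * (n - 1) * M - lam * mu) / L^2"
        using Lne by (simp add: field_simps)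
      ultimately show ?thesis by linarith
    qed
    moreover have hb: "((\<epsilon> * c1 x0 t0 + \<epsilon>^3 * c2 x0 t0 * t0) *\<^sub>R \<xi> x0 t0) \<bullet> p \<le> 2 * K * c * (3 * M + 3/2 * mu) / L^2"
    proof -
      let ?b = "(\<epsilon> * c1 x0 t0 + \<epsilon>^3 * c2 x0 t0 * t0) *\<^sub>R \<xi> x0 t0"
      have s0: "0 < x0 \<bullet> \<nu>" "x0 \<bullet> \<nu> < L" "\<bar>t0\<bar> < L^2" "norm (x0 - (x0 \<bullet> \<nu>) *\<^sub>R \<nu>) < L"
        using Q0 by (auto simp: mem_cylQ)
      have eL: "\<epsilon> * L \<le> c" using eps by (simp add: mult.commute)
      have nb: "norm ?b \<le> 2 * K * c / L"
      proof -
        have "norm ?b = \<bar>\<epsilon> * c1 x0 t0 + \<epsilon>^3 * c2 x0 t0 * t0\<bar>" using xi by simp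
        also have "\<dots> \<le> \<epsilon> * K + \<epsilon>^3 * K * L^2"
        proof -
          have "\<bar>\<epsilon> * c1 x0 t0\<bar> \<le> \<epsilon> * K" using bnd eps by (simp add: abs_mult mult_left_mono)
          moreover have "\<bar>\<epsilon>^3 * c2 x0 t0 * t0\<bar> \<le> \<epsilon>^3 * K * L^2"
            using bnd eps s0(3) K unfolding abs_mult by (intro mult_mono) auto
          ultimately show ?thesis using abs_triangle_ineq[of "\<epsilon> * c1 x0 t0" "\<epsilon>^3 * c2 x0 t0 * t0"] by linarith
        qed
        also have "\<epsilon> * K + \<epsilon>^3 * K * L^2 = K * \<epsilon> * (1 + (\<epsilon> * L)^2)"
          by (simp add: algebra_simps power2_eq_square power3_eq_cube)
        also have "\<dots> \<le> K * \<epsilon> * 2"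
        proof -
          have "(\<epsilon> * L)^2 \<le> 1" using eL c eps Lpos by (intro power_le_one) auto
          then show ?thesis using K eps by (intro mult_left_mono) auto
        qed
        also have "K * \<epsilon> * 2 \<le> 2 * K * c / L"
        proof -
          have "\<epsilon> \<le> c / L" using eL Lpos by (simp add: field_simps)
          then have "K * \<epsilon> \<le> K * (c / L)" using K by (rule mult_left_mono)
          moreover have "K * (c / L) * 2 = 2 * K * c / L" by simp
          ultimately show ?thesis by linarith
        qed
        finally show ?thesis .
      qed
      have np: "norm p \<le> (3 * M + 3/2 * mu) / L"
      proof -
        have "norm p \<le> \<bar>A / L - mu * (x0 \<bullet> \<nu>) / L^2\<bar> + (2 * M / L^2) * norm (x0 - (x0 \<bullet> \<nu>) *\<^sub>R \<nu>)"
          unfolding p_def using norm_triangle_ineq Mpos Lpos nu by (simp add: norm_triangle_le)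
        also have "\<bar>A / L - mu * (x0 \<bullet> \<nu>) / L^2\<bar> \<le> A / L + mu / L"
        proof -
          have "mu * (x0 \<bullet> \<nu>) / L^2 \<le> mu / L"
            using s0 mupos Lpos by (simp add: field_simps power2_eq_square)
          moreover have "mu * (x0 \<bullet> \<nu>) / L^2 \<ge> 0" using s0 mupos by simp
          moreover have "A / L \<ge> 0" using Mpos mupos Lpos A_def by simp
          ultimately show ?thesis by linarith
        qed
        also have "(2 * M / L^2) * norm (x0 - (x0 \<bullet> \<nu>) *\<^sub>R \<nu>) \<le> (2 * M / L^2) * L"
          using s0 Mpos Lpos by (intro mult_left_mono) auto
        finally show ?thesis unfolding A_def using Lpos by (simp add: field_simps power2_eq_square)
      qed
      have "?b \<bullet> p \<le> norm ?b * norm p" by (rule norm_cauchy_schwarz)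
      also have "\<dots> \<le> (2 * K * c / L) * ((3 * M + 3/2 * mu) / L)"
        using nb np K c Lpos by (intro mult_mono) auto
      also have "\<dots> = 2 * K * c * (3 * M + 3/2 * mu) / L^2" by (simp add: power2_eq_square)
      finally show ?thesis .
    qed
    moreover have key: "lam * mu - 2 * M - 2 * Lam * (n - 1) * M - 2 * K * c * (3 * M + 3/2 * mu) > 0"
    proof -
      have e1: "2 * K * c * (3 * M + 3/2 * mu) = 6 * K * c * M + 3 * K * c * mu" by (simp add: algebra_simps)
      have i1: "6 * K * c * M \<le> lam * M" using c Mpos by (simp add: mult_right_mono)
      have i2: "6 * K * c * mu \<le> lam * mu" using c mupos by (simp add: mult_right_mono)
      have gen: "LMU - 2 * M - P - (A1 + A2) > 0"
        if "LMU = 2 * (2 * M + P + LM + 1)" "A1 \<le> LM" "2 * A2 \<le> LMU" for LM P A1 A2 LMU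
        using that unfolding distrib_left by linarith
      have "lam * mu - 2 * M - 2 * Lam * (n - 1) * M - (6 * K * c * M + 3 * K * c * mu) > 0"
        using gen[OF lmu i1, of "3 * K * c * mu"] i2 by simp
      then show ?thesis using e1 by simp
    qed
    moreover have "- 2 * M / L^2 - (2 * Lam * (n - 1) * M - lam * mu) / L^2 - 2 * K * c * (3 * M + 3/2 * mu) / L^2
        = (lam * mu - 2 * M - 2 * Lam * (n - 1) * M - 2 * K * c * (3 * M + 3/2 * mu)) / L^2"
      using Lne by (simp add: field_simps)
    moreover have "(lam * mu - 2 * M - 2 * Lam * (n - 1) * M - 2 * K * c * (3 * M + 3/2 * mu)) / L^2 > 0"
      using key Lpos by simp
    ultimately show False by linarith
  qed
  show ?thesis
  proof (clarify)
    fix x t assume xt: "(x,t) \<in> cylQ \<nu> R"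
    have r: "0 < R / L" "R / L < 1" using eps by auto
    have xt': "0 < x \<bullet> \<nu>" "x \<bullet> \<nu> < R" "\<bar>t\<bar> < R^2" "norm (x - (x \<bullet> \<nu>) *\<^sub>R \<nu>) < R"
      using xt by (auto simp: mem_cylQ)
    have "R^2 < L^2" using eps by (simp add: power_strict_mono)
    then have "(x,t) \<in> cylQ \<nu> L" using xt' eps by (auto simp: mem_cylQ)
    then have w1: "w x t \<le> ?phi x t" by (rule le)
    have t1: "A * (x \<bullet> \<nu> / L) \<le> A * (R / L)"
      using xt' Lpos Mpos mupos A_def by (intro mult_left_mono divide_right_mono) auto
    have t2: "mu / 2 * (x \<bullet> \<nu> / L)^2 \<ge> 0" using mupos by simp
    have t3: "M * (norm (x - (x \<bullet> \<nu>) *\<^sub>R \<nu>) / L)^2 \<le> M * (R / L)"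
    proof -
      have "norm (x - (x \<bullet> \<nu>) *\<^sub>R \<nu>) / L \<le> R / L" using xt' Lpos by (simp add: divide_right_mono)
      then have "(norm (x - (x \<bullet> \<nu>) *\<^sub>R \<nu>) / L)^2 \<le> (R / L)^2" using Lpos by (intro power_mono) auto
      also have "(R / L)^2 \<le> R / L" using r mult_left_mono[of "R / L" 1 "R / L"] by (simp add: power2_eq_square)
      finally show ?thesis using Mpos by (intro mult_left_mono) auto
    qed
    have t4: "M * (t / L^2)^2 \<le> M * (R / L)"
    proof -
      have "\<bar>t\<bar> / L^2 \<le> R^2 / L^2" using xt' Lpos by (simp add: divide_right_mono)
      then have "(\<bar>t\<bar> / L^2)^2 \<le> (R^2 / L^2)^2" by (intro power_mono) auto
      also have "(R^2 / L^2)^2 = (R / L)^2 * (R / L)^2" by (simp add: power_divide power2_eq_square)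
      also have "\<dots> \<le> R / L * 1"
      proof (rule mult_mono)
        show "(R / L)^2 \<le> R / L" using r mult_left_mono[of "R / L" 1 "R / L"] by (simp add: power2_eq_square)
        show "(R / L)^2 \<le> 1" using r by (intro power_le_one) auto
      qed (use r in auto)
      finally have "(\<bar>t\<bar> / L^2)^2 \<le> R / L" by simp
      moreover have "(\<bar>t\<bar> / L^2)^2 = (t / L^2)^2" by (simp add: power_divide)
      ultimately have "(t / L^2)^2 \<le> R / L" by simp
      then show ?thesis using Mpos by (intro mult_left_mono) auto
    qed
    have "?phi x t \<le> c0 + (3 * M + mu / 2) * (R / L)"
    proof -
      have "?phi x t \<le> c0 + A * (R / L) + M * (R / L) + M * (R / L)"
        using t1 t2 t3 t4 unfolding phi_def by linarith
      moreover have "(3 * M + mu / 2) * (R / L) = A * (R / L) + M * (R / L) + M * (R / L)"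
        unfolding A_def by (simp add: algebra_simps)
      ultimately show ?thesis by linarith
    qed
    then show "w x t \<le> c0 + (3 * M + mu / 2) * R / L" using w1 by (simp add: times_divide_eq_right)
  qed
qed


theorem lemma3p3:
  fixes lam Lam c0 C0 K :: real
  assumes "0 < lam" and "lam < Lam" and "0 < c0" and "c0 < C0" and "0 \<le> K"
  shows "\<exists>c C. c > 0 \<and> C > 0 \<and>
    (\<forall>(\<nu>::real^'d) (c1::real^'d \<Rightarrow> real \<Rightarrow> real) (c2::real^'d \<Rightarrow> real \<Rightarrow> real)
       (\<xi>::real^'d \<Rightarrow> real \<Rightarrow> real^'d) (\<epsilon>::real) (L::real) (R::real)
       (w::real^'d \<Rightarrow> real \<Rightarrow> real).
      norm \<nu> = 1 \<and>
      continuous_on UNIV (\<lambda>z. c1 (fst z) (snd z)) \<and>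
      continuous_on UNIV (\<lambda>z. c2 (fst z) (snd z)) \<and>
      (\<forall>x t. \<bar>c1 x t\<bar> \<le> K \<and> \<bar>c2 x t\<bar> \<le> K) \<and>
      continuous_on UNIV (\<lambda>z. \<xi> (fst z) (snd z)) \<and>
      (\<forall>x t. norm (\<xi> x t) = 1) \<and>
      \<epsilon> > 0 \<and> 0 < R \<and> R < L \<and> L * \<epsilon> \<le> c \<and>
      continuous_on (closure (cylQ \<nu> L)) (\<lambda>z. w (fst z) (snd z)) \<and>
      visc_sub lam Lam (\<lambda>x t. (\<epsilon> * c1 x t + \<epsilon>^3 * c2 x t * t) *\<^sub>R \<xi> x t) w (cylQ \<nu> L) \<and>
      (\<forall>(x,t) \<in> closure (cylQ \<nu> L) \<inter> halfspace_bdry \<nu>. w x t \<le> c0) \<and>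
      (\<forall>(x,t) \<in> closure (cylQ \<nu> L). w x t \<le> C0)
      \<longrightarrow> (\<forall>(x,t) \<in> cylQ \<nu> R. w x t \<le> c0 + C * R / L))"
  proof -
  define M where "M = C0 - c0"
  define mu where "mu = 2 * (2 * M + 2 * Lam * (real CARD('d) - 1) * M + lam * M + 1) / lam"
  define A where "A = M + mu / 2"
  define c where "c = min 1 (lam / (6 * K + 1))"
  have Mpos: "M > 0" using assms M_def by simp
  have c1: "0 < c" using assms unfolding c_def by simp
  have c2: "c \<le> 1" unfolding c_def by simp
  have c3: "6 * K * c \<le> lam"
  proof -
    have "c \<le> lam / (6 * K + 1)" unfolding c_def by simp
    then have "(6 * K + 1) * c \<le> lam" using assms by (simp add: field_simps)
    moreover have "0 \<le> c" using c1 by simp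
    ultimately show ?thesis by (simp add: algebra_simps)
  qed
  have mupos: "mu > 0"
  proof -
    have z1: "2 * Lam * (real CARD('d) - 1) * M \<ge> 0" using assms Mpos by simp
    have z2: "lam * M > 0" using assms Mpos by simp
    have gen: "0 < (2::real) * (2 * M + Z + Y + 1)" if "0 \<le> Z" "0 < Y" for Z Y
      using Mpos that by simp
    have "0 < 2 * (2 * M + 2 * Lam * (real CARD('d) - 1) * M + lam * M + 1)"
      by (rule gen[OF z1 z2])
    then show ?thesis unfolding mu_def using assms by simp
  qed
  show ?thesis
  proof (rule exI[of _ c], rule exI[of _ "3 * M + mu / 2"], intro conjI allI impI)
    show "0 < c" by (rule c1)
    show "0 < 3 * M + mu / 2" using Mpos mupos by simp
  next
    fix \<nu> :: "real^'d" and c1 c2 :: "real^'d \<Rightarrow> real \<Rightarrow> real" and \<xi> :: "real^'d \<Rightarrow> real \<Rightarrow> real^'d"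
      and \<epsilon> L R :: real and w :: "real^'d \<Rightarrow> real \<Rightarrow> real"
    assume H: "norm \<nu> = 1 \<and>
      continuous_on UNIV (\<lambda>z. c1 (fst z) (snd z)) \<and>
      continuous_on UNIV (\<lambda>z. c2 (fst z) (snd z)) \<and>
      (\<forall>x t. \<bar>c1 x t\<bar> \<le> K \<and> \<bar>c2 x t\<bar> \<le> K) \<and>
      continuous_on UNIV (\<lambda>z. \<xi> (fst z) (snd z)) \<and>
      (\<forall>x t. norm (\<xi> x t) = 1) \<and>
      \<epsilon> > 0 \<and> 0 < R \<and> R < L \<and> L * \<epsilon> \<le> c \<and>
      continuous_on (closure (cylQ \<nu> L)) (\<lambda>z. w (fst z) (snd z)) \<and>
      visc_sub lam Lam (\<lambda>x t. (\<epsilon> * c1 x t + \<epsilon>^3 * c2 x t * t) *\<^sub>R \<xi> x t) w (cylQ \<nu> L) \<and>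
      (\<forall>(x,t) \<in> closure (cylQ \<nu> L) \<inter> halfspace_bdry \<nu>. w x t \<le> c0) \<and>
      (\<forall>(x,t) \<in> closure (cylQ \<nu> L). w x t \<le> C0)"
    then show "\<forall>(x,t) \<in> cylQ \<nu> R. w x t \<le> c0 + (3 * M + mu / 2) * R / L"
      by (elim conjE)
        (rule main_bound[OF assms M_def mu_def A_def \<open>0 < c\<close> \<open>c \<le> 1\<close> \<open>6 * K * c \<le> lam\<close>]; assumption)
  qed
qed

end
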